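(* Let $n\ge 7$ and let $D$ be a total dominating set of $G_{n,4}$. Then $|D\cap H_i^4|\ge 4$ for every $i$ with $1\le i\le n$. Moreover, if for some $i$ with $1\le i\le n$ we have $|N(v)\cap D|=1$ for every vertex $v\in H_i^4$, then $D\setminus (D\cap H_i^4)$ is a total dominating set of $G_i^4$.
   Context: $G_{n,m}=C_n\times C_m$ (Cartesian product of cycles) has vertex set $\{x_{ij}: 1\le i\le n,\ 1\le j\le m\}$, where $x_{ij}$ and $x_{i'j'}$ are adjacent iff either $i=i'$ and $j,j'$ are adjacent in the cycle $C_m$ on $\{1,\dots,m\}$, or $j=j'$ and $i,i'$ are adjacent in the cycle $C_n$ on $\{1,\dots,n\}$. $N(v)$ is the open neighbourhood of $v$. Let $Y_i=\{x_{ij}:1\le j\le m\}$ and $H_i^j=Y_i\cup Y_{i+1}\cup\cdots\cup Y_{i+j-1}$ (first indices modulo $n$). $G_i^j$ is the graph obtained from $G_{n,4}-H_i^j$ by adding the edges $x_{(i-1)k}x_{(i+j)k}$, $1\le k\le 4$ (indices modulo $n$); thus $G_i^4\cong G_{n-4,4}$. A set $D$ is a total dominating set of a graph $G$ if every vertex of $G$ has a neighbour (in $G$) in $D$. *)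

theory Defs
  imports Main
begin

(* Indices are 1-based as in the paper: vertex x_{ij} is the pair (i,j),
   1 <= i <= n, 1 <= j <= m. *)

(* reduce an index modulo n into the range {1..n} (0 maps to n) *)
definition wrap :: "nat \<Rightarrow> nat \<Rightarrow> nat" where
  "wrap n t = ((t + n - 1) mod n) + 1"

definition cyc_adj :: "nat \<Rightarrow> nat \<Rightarrow> nat \<Rightarrow> bool" where
  "cyc_adj n a b \<longleftrightarrow> a \<in> {1..n} \<and> b \<in> {1..n} \<and> a \<noteq> b \<and>
      (b = a mod n + 1 \<or> a = b mod n + 1)"

definition gverts :: "nat \<Rightarrow> nat \<Rightarrow> (nat \<times> nat) set" where
  "gverts n m = {1..n} \<times> {1..m}"

definition gadj :: "nat \<Rightarrow> nat \<Rightarrow> nat \<times> nat \<Rightarrow> nat \<times> nat \<Rightarrow> bool" where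
  "gadj n m u v \<longleftrightarrow>
     (fst u = fst v \<and> fst u \<in> {1..n} \<and> cyc_adj m (snd u) (snd v)) \<or>
     (snd u = snd v \<and> snd u \<in> {1..m} \<and> cyc_adj n (fst u) (fst v))"

definition nbhd :: "'a set \<Rightarrow> ('a \<Rightarrow> 'a \<Rightarrow> bool) \<Rightarrow> 'a \<Rightarrow> 'a set" where
  "nbhd V E v = {u \<in> V. E v u}"

definition total_dom :: "'a set \<Rightarrow> ('a \<Rightarrow> 'a \<Rightarrow> bool) \<Rightarrow> 'a set \<Rightarrow> bool" where
  "total_dom V E D \<longleftrightarrow> D \<subseteq> V \<and> (\<forall>v\<in>V. \<exists>u\<in>D. E v u)"

(* H_i^j = Y_i \<union> ... \<union> Y_{i+j-1}, first indices mod n *)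
definition Hset :: "nat \<Rightarrow> nat \<Rightarrow> nat \<Rightarrow> nat \<Rightarrow> (nat \<times> nat) set" where
  "Hset n m i j = {(wrap n (i + t), k) | t k. t < j \<and> k \<in> {1..m}}"

(* G_i^j: from G_{n,4} - H_i^j add edges x_{(i-1)k} x_{(i+j)k}, 1 <= k <= 4 *)
definition Gij_verts :: "nat \<Rightarrow> nat \<Rightarrow> nat \<Rightarrow> (nat \<times> nat) set" where
  "Gij_verts n i j = gverts n 4 - Hset n 4 i j"

definition Gij_adj :: "nat \<Rightarrow> nat \<Rightarrow> nat \<Rightarrow> nat \<times> nat \<Rightarrow> nat \<times> nat \<Rightarrow> bool" where
  "Gij_adj n i j u v \<longleftrightarrow>
     (u \<in> Gij_verts n i j \<and> v \<in> Gij_verts n i j \<and> gadj n 4 u v) \<or>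
     (\<exists>k\<in>{1..4}. (u = (wrap n (i - 1), k) \<and> v = (wrap n (i + j), k)) \<or>
                 (v = (wrap n (i - 1), k) \<and> u = (wrap n (i + j), k)))"

end

theory Submission
  imports Defs
begin


definition R :: "nat \<Rightarrow> nat \<Rightarrow> nat \<Rightarrow> nat" where
  "R n i t = (if i + t \<le> n then i + t else i + t - n)"
definition RM :: "nat \<Rightarrow> nat \<Rightarrow> nat" where
  "RM n i = (if i = 1 then n else i - 1)"
definition PR :: "nat \<Rightarrow> nat \<Rightarrow> nat \<Rightarrow> nat" where
  "PR n i t = (if t = 0 then RM n i else R n i (t - 1))"

lemma wrapR:
  assumes "i \<in> {1..n}" "t < n"
  shows "wrap n (i + t) = R n i t"
proof (cases "i + t \<le> n")
  case True
  have "i + t + n - 1 = (i + t - 1) + n" using assms by auto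
  then have "(i + t + n - 1) mod n = ((i + t - 1) + n) mod n" by (rule arg_cong[where f="\<lambda>x. x mod n"])
  also have "\<dots> = i + t - 1" using True assms by (simp only: mod_add_self2) (simp add: mod_less)
  finally have "(i + t + n - 1) mod n = i + t - 1" .
  then show ?thesis using True assms by (simp add: wrap_def R_def)
next
  case False
  have "i + t + n - 1 = (i + t - 1 - n) + n + n" using assms False by auto
  then have "(i + t + n - 1) mod n = ((i + t - 1 - n) + n + n) mod n" by (rule arg_cong[where f="\<lambda>x. x mod n"])
  also have "\<dots> = i + t - 1 - n" using False assms by (simp only: mod_add_self2) (simp add: mod_less)
  finally have "(i + t + n - 1) mod n = i + t - 1 - n" .
  then show ?thesis using False assms by (simp add: wrap_def R_def)
qed

lemma wrapRM:
  assumes "i \<in> {1..n}"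
  shows "wrap n (i - 1) = RM n i"
proof (cases "i = 1")
  case True
  have "(i - 1 + n - 1) mod n = n - 1" using True assms by simp
  then show ?thesis using True assms by (simp add: wrap_def RM_def)
next
  case False
  have "i - 1 + n - 1 = (i - 2) + n" using assms False by auto
  then have "(i - 1 + n - 1) mod n = ((i - 2) + n) mod n" by (rule arg_cong[where f="\<lambda>x. x mod n"])
  also have "\<dots> = i - 2" using False assms by (simp only: mod_add_self2) (rule mod_less, auto)
  finally have "(i - 1 + n - 1) mod n = i - 2" .
  then show ?thesis using False assms by (simp add: wrap_def RM_def, arith)
qed

lemma mod_small: "(a::nat) \<in> {1..n} \<Longrightarrow> a mod n = (if a = n then 0 else a)"
proof -
  assume a: "a \<in> {1..n}"
  show ?thesis
  proof (cases "a = n")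
    case True then show ?thesis by simp
  next
    case False then have "a < n" using a by auto
    then show ?thesis using False by simp
  qed
qed

lemma cyc_adj_iff:
  "cyc_adj n a b \<longleftrightarrow> a \<in> {1..n} \<and> b \<in> {1..n} \<and> a \<noteq> b \<and>
     (b = (if a = n then 1 else a + 1) \<or> a = (if b = n then 1 else b + 1))"
  unfolding cyc_adj_def
  by (metis mod_small add_0)

lemma cyc4: "cyc_adj 4 c d \<longleftrightarrow> (c,d) \<in> {(1,2),(2,1),(2,3),(3,2),(3,4),(4,3),(4,1),(1,4)}"
  unfolding cyc_adj_iff by auto

lemma rowadj:
  assumes "n \<ge> 7" "i \<in> {1..n}" "t \<le> 3"
  shows "cyc_adj n (R n i t) y \<longleftrightarrow> y = PR n i t \<or> y = R n i (t + 1)"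
  using assms unfolding cyc_adj_iff PR_def R_def RM_def
  by (auto split: if_splits)

lemma distinctR:
  assumes "n \<ge> 7" "i \<in> {1..n}"
  shows "distinct [RM n i, R n i 0, R n i 1, R n i 2, R n i 3, R n i 4]"
  using assms unfolding R_def RM_def by (auto split: if_splits)

lemma inR:
  assumes "n \<ge> 7" "i \<in> {1..n}" "t \<le> 4"
  shows "R n i t \<in> {1..n}" "RM n i \<in> {1..n}"
  using assms unfolding R_def RM_def by auto



lemma col4: "(c::nat) \<in> {1..4} \<longleftrightarrow> c = 1 \<or> c = 2 \<or> c = 3 \<or> c = 4"
  by auto

lemma cyc4':
  assumes "c \<in> {1..4}"
  shows "cyc_adj 4 c y \<longleftrightarrow> y = c mod 4 + 1 \<or> y = (c+2) mod 4 + 1"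
proof -
  have "c = 1 \<or> c = 2 \<or> c = 3 \<or> c = 4" using assms by auto
  then show ?thesis unfolding cyc4 by auto
qed

lemma nb:
  assumes "n \<ge> 7" "i \<in> {1..n}" "t \<le> 3" "c \<in> {1..4}"
  shows "gadj n 4 (R n i t, c) u \<longleftrightarrow>
     u \<in> {(PR n i t, c), (R n i (t+1), c), (R n i t, c mod 4 + 1), (R n i t, (c+2) mod 4 + 1)}"
proof (cases u)
  case (Pair x y)
  have r: "R n i t \<in> {1..n}" using inR assms by auto
  have "gadj n 4 (R n i t, c) (x, y) \<longleftrightarrow>
     (x = R n i t \<and> (y = c mod 4 + 1 \<or> y = (c+2) mod 4 + 1)) \<or> (y = c \<and> (x = PR n i t \<or> x = R n i (t + 1)))"
    unfolding gadj_def fst_conv snd_conv rowadj[OF assms(1-3)] cyc4'[OF assms(4)] using r assms(4) by auto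
  then show ?thesis unfolding Pair by auto
qed

lemma nbhd_eq:
  assumes "n \<ge> 7" "i \<in> {1..n}" "t \<le> 3" "c \<in> {1..4}"
  shows "nbhd (gverts n 4) (gadj n 4) (R n i t, c) =
     {(PR n i t, c), (R n i (t+1), c), (R n i t, c mod 4 + 1), (R n i t, (c+2) mod 4 + 1)}"
proof -
  have "PR n i t \<in> {1..n}" "R n i (t+1) \<in> {1..n}" "R n i t \<in> {1..n}"
    using inR[OF assms(1,2)] assms(3) unfolding PR_def by auto
  moreover have "c mod 4 + 1 \<in> {1..4}" "(c+2) mod 4 + 1 \<in> {1..4}" by auto
  ultimately show ?thesis using assms unfolding nbhd_def gverts_def
    by (auto simp: nb[OF assms])
qed

lemma domv:
  assumes "total_dom (gverts n 4) (gadj n 4) D" "n \<ge> 7" "i \<in> {1..n}" "t \<le> 3" "c \<in> {1..4}"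
  shows "(PR n i t, c) \<in> D \<or> (R n i (t+1), c) \<in> D \<or> (R n i t, c mod 4 + 1) \<in> D \<or> (R n i t, (c+2) mod 4 + 1) \<in> D"
proof -
  have "(R n i t, c) \<in> gverts n 4" using inR[OF assms(2,3)] assms(4,5) by (auto simp: gverts_def)
  then obtain u where "u \<in> D" "gadj n 4 (R n i t, c) u" using assms(1) unfolding total_dom_def by blast
  then show ?thesis using nb[OF assms(2-5)] by auto
qed

lemma ex1:
  assumes "distinct [a,b,c,e]" "card ({a,b,c,e} \<inter> D) = 1"
  shows "(a\<in>D \<or> b\<in>D \<or> c\<in>D \<or> e\<in>D) \<and> \<not>(a\<in>D \<and> b\<in>D) \<and> \<not>(a\<in>D \<and> c\<in>D) \<and> \<not>(a\<in>D \<and> e\<in>D)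
     \<and> \<not>(b\<in>D \<and> c\<in>D) \<and> \<not>(b\<in>D \<and> e\<in>D) \<and> \<not>(c\<in>D \<and> e\<in>D)"
proof -
  obtain x where X: "{a,b,c,e} \<inter> D = {x}" using assms(2) card_1_singletonE by blast
  have 1: "\<forall>y\<in>{a,b,c,e}. y\<in>D \<longleftrightarrow> y = x" using X by blast
  have 2: "x\<in>{a,b,c,e}" using X by blast
  show ?thesis using 1 2 assms(1) by auto
qed

lemma exv:
  assumes "n \<ge> 7" "i \<in> {1..n}" "t \<le> 3" "c \<in> {1..4}"
    and "card (nbhd (gverts n 4) (gadj n 4) (R n i t, c) \<inter> D) = 1"
  shows "((PR n i t, c)\<in>D \<or> (R n i (t+1), c)\<in>D \<or> (R n i t, c mod 4 + 1)\<in>D \<or> (R n i t, (c+2) mod 4 + 1)\<in>D)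
     \<and> \<not>((PR n i t, c)\<in>D \<and> (R n i (t+1), c)\<in>D) \<and> \<not>((PR n i t, c)\<in>D \<and> (R n i t, c mod 4 + 1)\<in>D)
     \<and> \<not>((PR n i t, c)\<in>D \<and> (R n i t, (c+2) mod 4 + 1)\<in>D)
     \<and> \<not>((R n i (t+1), c)\<in>D \<and> (R n i t, c mod 4 + 1)\<in>D) \<and> \<not>((R n i (t+1), c)\<in>D \<and> (R n i t, (c+2) mod 4 + 1)\<in>D)
     \<and> \<not>((R n i t, c mod 4 + 1)\<in>D \<and> (R n i t, (c+2) mod 4 + 1)\<in>D)"
proof -
  have d: "distinct [RM n i, R n i 0, R n i 1, R n i 2, R n i 3, R n i 4]" using distinctR[OF assms(1,2)] .
  have rows: "PR n i t \<noteq> R n i (t+1)" "PR n i t \<noteq> R n i t" "R n i (t+1) \<noteq> R n i t"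
    using d assms(3) unfolding PR_def by (auto simp: le_Suc_eq numeral_eq_Suc)
  have cc: "c = 1 \<or> c = 2 \<or> c = 3 \<or> c = 4" using assms(4) by auto
  have cols: "c \<noteq> c mod 4 + 1" "c \<noteq> (c+2) mod 4 + 1" "c mod 4 + 1 \<noteq> (c+2) mod 4 + 1"
    using cc by auto
  have "distinct [(PR n i t, c), (R n i (t+1), c), (R n i t, c mod 4 + 1), (R n i t, (c+2) mod 4 + 1)]"
    using rows cols by auto
  moreover have "card ({(PR n i t, c), (R n i (t+1), c), (R n i t, c mod 4 + 1), (R n i t, (c+2) mod 4 + 1)} \<inter> D) = 1"
    using assms(5) unfolding nbhd_eq[OF assms(1-4)] .
  ultimately show ?thesis by (rule ex1)
qed



lemma Q1:
  fixes b0 b1 b2 b3 c0 c1 c2 c3 e0 e1 e2 e3 f0 f1 f2 f3 :: bool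
  assumes
  "(b0\<or>e0\<or>c1\<or>c3)" "(b1\<or>e1\<or>c2\<or>c0)" "(b2\<or>e2\<or>c3\<or>c1)" "(b3\<or>e3\<or>c0\<or>c2)"
  "(c0\<or>f0\<or>e1\<or>e3)" "(c1\<or>f1\<or>e2\<or>e0)" "(c2\<or>f2\<or>e3\<or>e1)" "(c3\<or>f3\<or>e0\<or>e2)"
  shows "(4::nat) \<le> of_bool b0 + of_bool b1 + of_bool b2 + of_bool b3 + of_bool c0 + of_bool c1 + of_bool c2 + of_bool c3
   + of_bool e0 + of_bool e1 + of_bool e2 + of_bool e3 + of_bool f0 + of_bool f1 + of_bool f2 + of_bool f3"
  using assms by (cases c0; cases c1; cases c2; cases c3; cases e0; cases e1; cases e2; cases e3; simp_all)

lemma lt4: "(t::nat) < 4 \<longleftrightarrow> t = 0 \<or> t = 1 \<or> t = 2 \<or> t = 3" by auto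

lemma HR:
  assumes "n \<ge> 7" "i \<in> {1..n}"
  shows "Hset n 4 i 4 = {(R n i t, k) | t k. t < 4 \<and> k \<in> {1..4}}"
proof -
  have w: "\<And>t. t < 4 \<Longrightarrow> wrap n (i + t) = R n i t" using wrapR[OF assms(2)] assms(1) by auto
  show ?thesis unfolding Hset_def
  proof (intro set_eqI iffI)
    fix x :: "nat \<times> nat" assume "x \<in> {(wrap n (i + t), k) |t k. t < 4 \<and> k \<in> {1..4}}"
    then obtain t k where "x = (wrap n (i + t), k)" "t < 4" "k \<in> {1..4}" by blast
    moreover have "x = (R n i t, k)" using w[of t] \<open>t < 4\<close> \<open>x = (wrap n (i + t), k)\<close> by simp
    ultimately show "x \<in> {(R n i t, k) |t k. t < 4 \<and> k \<in> {1..4}}" by blast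
  next
    fix x :: "nat \<times> nat" assume "x \<in> {(R n i t, k) |t k. t < 4 \<and> k \<in> {1..4}}"
    then obtain t k where "x = (R n i t, k)" "t < 4" "k \<in> {1..4}" by blast
    moreover have "x = (wrap n (i + t), k)" using w[of t] \<open>t < 4\<close> \<open>x = (R n i t, k)\<close> by simp
    ultimately show "x \<in> {(wrap n (i + t), k) |t k. t < 4 \<and> k \<in> {1..4}}" by blast
  qed
qed

lemma HF:
  assumes "n \<ge> 7" "i \<in> {1..n}"
  shows "Hset n 4 i 4 = (\<lambda>(t,k). (R n i t, k)) ` ({0,1,2,3::nat} \<times> {1,2,3,4::nat})"
proof -
  have a: "{0,1,2,3::nat} = {..<4}" "{1,2,3,4::nat} = {1..4}" by auto
  show ?thesis unfolding HR[OF assms] a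
  proof (intro set_eqI iffI)
    fix x :: "nat \<times> nat" assume "x \<in> {(R n i t, k) |t k. t < 4 \<and> k \<in> {1..4}}"
    then obtain t k where "x = (R n i t, k)" "t < 4" "k \<in> {1..4}" by blast
    then show "x \<in> (\<lambda>(t,k). (R n i t, k)) ` ({..<4} \<times> {1..4})"
      by (intro image_eqI[where x="(t,k)"]) auto
  next
    fix x :: "nat \<times> nat" assume "x \<in> (\<lambda>(t,k). (R n i t, k)) ` ({..<4} \<times> {1..4})"
    then obtain t k where "x = (R n i t, k)" "t < 4" "k \<in> {1..4}" by auto
    then show "x \<in> {(R n i t, k) |t k. t < 4 \<and> k \<in> {1..4}}" by blast
  qed
qed

lemma injF:
  assumes "n \<ge> 7" "i \<in> {1..n}"
  shows "inj_on (\<lambda>(t,k). (R n i t, k)) ({0,1,2,3::nat} \<times> {1,2,3,4::nat})"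
  using distinctR[OF assms] unfolding inj_on_def by auto

lemma cardsum:
  assumes "n \<ge> 7" "i \<in> {1..n}"
  shows "card (D \<inter> Hset n 4 i 4) = (\<Sum>t\<in>{0,1,2,3::nat}. \<Sum>k\<in>{1,2,3,4::nat}. of_bool ((R n i t, k) \<in> D))"
proof -
  let ?f = "\<lambda>(t,k). (R n i t, k)" and ?S = "{0,1,2,3::nat} \<times> {1,2,3,4::nat}"
  have "D \<inter> Hset n 4 i 4 = ?f ` {p \<in> ?S. ?f p \<in> D}" unfolding HF[OF assms] by auto
  moreover have "inj_on ?f {p \<in> ?S. ?f p \<in> D}" using injF[OF assms] by (rule inj_on_subset) auto
  ultimately have "card (D \<inter> Hset n 4 i 4) = card {p \<in> ?S. ?f p \<in> D}" by (simp add: card_image)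
  also have "\<dots> = (\<Sum>p\<in>?S. of_bool (?f p \<in> D))"
    by (simp add: Int_def conj_commute)
  also have "\<dots> = (\<Sum>t\<in>{0,1,2,3::nat}. \<Sum>k\<in>{1,2,3,4::nat}. of_bool ((R n i t, k) \<in> D))"
    unfolding sum.cartesian_product by (rule sum.cong) auto
  finally show ?thesis .
qed

lemma PRs: "PR n i 0 = RM n i" "PR n i 1 = R n i 0" "PR n i 2 = R n i 1" "PR n i 3 = R n i 2"
  unfolding PR_def by (simp_all add: eval_nat_numeral)

lemma ar: "(0::nat)+1 = 1" "(1::nat)+1 = 2" "(2::nat)+1 = 3" "(3::nat)+1 = 4" by simp_all

lemma cl: "(1::nat) mod 4 + 1 = 2" "(2::nat) mod 4 + 1 = 3" "(3::nat) mod 4 + 1 = 4" "(4::nat) mod 4 + 1 = 1"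
  "((1::nat)+2) mod 4 + 1 = 4" "((2::nat)+2) mod 4 + 1 = 1" "((3::nat)+2) mod 4 + 1 = 2" "((4::nat)+2) mod 4 + 1 = 3"
  by simp_all

lemma exv2:
  assumes "n \<ge> 7" "i \<in> {1..n}" "\<forall>v\<in>Hset n 4 i 4. card (nbhd (gverts n 4) (gadj n 4) v \<inter> D) = 1"
    "t \<le> 3" "c \<in> {1..4}"
  shows "((PR n i t, c)\<in>D \<or> (R n i (t+1), c)\<in>D \<or> (R n i t, c mod 4 + 1)\<in>D \<or> (R n i t, (c+2) mod 4 + 1)\<in>D)
     \<and> \<not>((PR n i t, c)\<in>D \<and> (R n i (t+1), c)\<in>D) \<and> \<not>((PR n i t, c)\<in>D \<and> (R n i t, c mod 4 + 1)\<in>D)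
     \<and> \<not>((PR n i t, c)\<in>D \<and> (R n i t, (c+2) mod 4 + 1)\<in>D)
     \<and> \<not>((R n i (t+1), c)\<in>D \<and> (R n i t, c mod 4 + 1)\<in>D) \<and> \<not>((R n i (t+1), c)\<in>D \<and> (R n i t, (c+2) mod 4 + 1)\<in>D)
     \<and> \<not>((R n i t, c mod 4 + 1)\<in>D \<and> (R n i t, (c+2) mod 4 + 1)\<in>D)"
proof -
  have "(R n i t, c) \<in> Hset n 4 i 4" unfolding HR[OF assms(1,2)] using assms(4,5) by auto
  then have "card (nbhd (gverts n 4) (gadj n 4) (R n i t, c) \<inter> D) = 1" using assms(3) by blast
  then show ?thesis by (rule exv[OF assms(1,2,4,5)])
qed

lemma part1:
  assumes "n \<ge> 7" "i \<in> {1..n}" "total_dom (gverts n 4) (gadj n 4) D"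
  shows "card (D \<inter> Hset n 4 i 4) \<ge> 4"
proof -
  have d: "distinct [RM n i, R n i 0, R n i 1, R n i 2, R n i 3, R n i 4]" using distinctR[OF assms(1,2)] .
  have S: "card (D \<inter> Hset n 4 i 4) = of_bool ((R n i 0, 1) \<in> D) + of_bool ((R n i 0, 2) \<in> D) + of_bool ((R n i 0, 3) \<in> D) + of_bool ((R n i 0, 4) \<in> D) + of_bool ((R n i 1, 1) \<in> D) + of_bool ((R n i 1, 2) \<in> D) + of_bool ((R n i 1, 3) \<in> D) + of_bool ((R n i 1, 4) \<in> D) + of_bool ((R n i 2, 1) \<in> D) + of_bool ((R n i 2, 2) \<in> D) + of_bool ((R n i 2, 3) \<in> D) + of_bool ((R n i 2, 4) \<in> D) + of_bool ((R n i 3, 1) \<in> D) + of_bool ((R n i 3, 2) \<in> D) + of_bool ((R n i 3, 3) \<in> D) + of_bool ((R n i 3, 4) \<in> D)"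
    unfolding cardsum[OF assms(1,2)] by (simp del: sum_of_bool_eq)
  have D0: "(R n i 0, 1) \<in> D \<or> (R n i 2, 1) \<in> D \<or> (R n i 1, 2) \<in> D \<or> (R n i 1, 4) \<in> D" by (rule domv[OF assms(3,1,2), of 1 1, unfolded PRs ar cl]) simp_all
  have D1: "(R n i 0, 2) \<in> D \<or> (R n i 2, 2) \<in> D \<or> (R n i 1, 3) \<in> D \<or> (R n i 1, 1) \<in> D" by (rule domv[OF assms(3,1,2), of 1 2, unfolded PRs ar cl]) simp_all
  have D2: "(R n i 0, 3) \<in> D \<or> (R n i 2, 3) \<in> D \<or> (R n i 1, 4) \<in> D \<or> (R n i 1, 2) \<in> D" by (rule domv[OF assms(3,1,2), of 1 3, unfolded PRs ar cl]) simp_all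
  have D3: "(R n i 0, 4) \<in> D \<or> (R n i 2, 4) \<in> D \<or> (R n i 1, 1) \<in> D \<or> (R n i 1, 3) \<in> D" by (rule domv[OF assms(3,1,2), of 1 4, unfolded PRs ar cl]) simp_all
  have D4: "(R n i 1, 1) \<in> D \<or> (R n i 3, 1) \<in> D \<or> (R n i 2, 2) \<in> D \<or> (R n i 2, 4) \<in> D" by (rule domv[OF assms(3,1,2), of 2 1, unfolded PRs ar cl]) simp_all
  have D5: "(R n i 1, 2) \<in> D \<or> (R n i 3, 2) \<in> D \<or> (R n i 2, 3) \<in> D \<or> (R n i 2, 1) \<in> D" by (rule domv[OF assms(3,1,2), of 2 2, unfolded PRs ar cl]) simp_all
  have D6: "(R n i 1, 3) \<in> D \<or> (R n i 3, 3) \<in> D \<or> (R n i 2, 4) \<in> D \<or> (R n i 2, 2) \<in> D" by (rule domv[OF assms(3,1,2), of 2 3, unfolded PRs ar cl]) simp_all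
  have D7: "(R n i 1, 4) \<in> D \<or> (R n i 3, 4) \<in> D \<or> (R n i 2, 1) \<in> D \<or> (R n i 2, 3) \<in> D" by (rule domv[OF assms(3,1,2), of 2 4, unfolded PRs ar cl]) simp_all
  show ?thesis unfolding S by (rule Q1[OF D0 D1 D2 D3 D4 D5 D6 D7])
qed
lemma props:
  assumes "n \<ge> 7" "i \<in> {1..n}"
    and cond: "\<forall>v\<in>Hset n 4 i 4. card (nbhd (gverts n 4) (gadj n 4) v \<inter> D) = 1"
  shows "\<forall>c\<in>{1..4}. ((R n i 0, c) \<in> D \<longrightarrow> (R n i 4, c) \<in> D) \<and> ((R n i 3, c) \<in> D \<longrightarrow> (RM n i, c) \<in> D)"
proof -
  have E0: "((RM n i, 1) \<in> D \<or> (R n i 1, 1) \<in> D \<or> (R n i 0, 2) \<in> D \<or> (R n i 0, 4) \<in> D) \<and> \<not>((RM n i, 1) \<in> D \<and> (R n i 1, 1) \<in> D) \<and> \<not>((RM n i, 1) \<in> D \<and> (R n i 0, 2) \<in> D) \<and> \<not>((RM n i, 1) \<in> D \<and> (R n i 0, 4) \<in> D) \<and> \<not>((R n i 1, 1) \<in> D \<and> (R n i 0, 2) \<in> D) \<and> \<not>((R n i 1, 1) \<in> D \<and> (R n i 0, 4) \<in> D) \<and> \<not>((R n i 0, 2) \<in> D \<and> (R n i 0, 4) \<in> D)"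
    by (rule exv2[OF assms(1,2) cond, of 0 1, unfolded PRs ar cl]) simp_all
  have E1: "((RM n i, 2) \<in> D \<or> (R n i 1, 2) \<in> D \<or> (R n i 0, 3) \<in> D \<or> (R n i 0, 1) \<in> D) \<and> \<not>((RM n i, 2) \<in> D \<and> (R n i 1, 2) \<in> D) \<and> \<not>((RM n i, 2) \<in> D \<and> (R n i 0, 3) \<in> D) \<and> \<not>((RM n i, 2) \<in> D \<and> (R n i 0, 1) \<in> D) \<and> \<not>((R n i 1, 2) \<in> D \<and> (R n i 0, 3) \<in> D) \<and> \<not>((R n i 1, 2) \<in> D \<and> (R n i 0, 1) \<in> D) \<and> \<not>((R n i 0, 3) \<in> D \<and> (R n i 0, 1) \<in> D)"
    by (rule exv2[OF assms(1,2) cond, of 0 2, unfolded PRs ar cl]) simp_all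
  have E2: "((RM n i, 3) \<in> D \<or> (R n i 1, 3) \<in> D \<or> (R n i 0, 4) \<in> D \<or> (R n i 0, 2) \<in> D) \<and> \<not>((RM n i, 3) \<in> D \<and> (R n i 1, 3) \<in> D) \<and> \<not>((RM n i, 3) \<in> D \<and> (R n i 0, 4) \<in> D) \<and> \<not>((RM n i, 3) \<in> D \<and> (R n i 0, 2) \<in> D) \<and> \<not>((R n i 1, 3) \<in> D \<and> (R n i 0, 4) \<in> D) \<and> \<not>((R n i 1, 3) \<in> D \<and> (R n i 0, 2) \<in> D) \<and> \<not>((R n i 0, 4) \<in> D \<and> (R n i 0, 2) \<in> D)"
    by (rule exv2[OF assms(1,2) cond, of 0 3, unfolded PRs ar cl]) simp_all
  have E3: "((RM n i, 4) \<in> D \<or> (R n i 1, 4) \<in> D \<or> (R n i 0, 1) \<in> D \<or> (R n i 0, 3) \<in> D) \<and> \<not>((RM n i, 4) \<in> D \<and> (R n i 1, 4) \<in> D) \<and> \<not>((RM n i, 4) \<in> D \<and> (R n i 0, 1) \<in> D) \<and> \<not>((RM n i, 4) \<in> D \<and> (R n i 0, 3) \<in> D) \<and> \<not>((R n i 1, 4) \<in> D \<and> (R n i 0, 1) \<in> D) \<and> \<not>((R n i 1, 4) \<in> D \<and> (R n i 0, 3) \<in> D) \<and> \<not>((R n i 0, 1) \<in> D \<and> (R n i 0, 3) \<in> D)"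
    by (rule exv2[OF assms(1,2) cond, of 0 4, unfolded PRs ar cl]) simp_all
  have E4: "((R n i 0, 1) \<in> D \<or> (R n i 2, 1) \<in> D \<or> (R n i 1, 2) \<in> D \<or> (R n i 1, 4) \<in> D) \<and> \<not>((R n i 0, 1) \<in> D \<and> (R n i 2, 1) \<in> D) \<and> \<not>((R n i 0, 1) \<in> D \<and> (R n i 1, 2) \<in> D) \<and> \<not>((R n i 0, 1) \<in> D \<and> (R n i 1, 4) \<in> D) \<and> \<not>((R n i 2, 1) \<in> D \<and> (R n i 1, 2) \<in> D) \<and> \<not>((R n i 2, 1) \<in> D \<and> (R n i 1, 4) \<in> D) \<and> \<not>((R n i 1, 2) \<in> D \<and> (R n i 1, 4) \<in> D)"
    by (rule exv2[OF assms(1,2) cond, of 1 1, unfolded PRs ar cl]) simp_all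
  have E5: "((R n i 0, 2) \<in> D \<or> (R n i 2, 2) \<in> D \<or> (R n i 1, 3) \<in> D \<or> (R n i 1, 1) \<in> D) \<and> \<not>((R n i 0, 2) \<in> D \<and> (R n i 2, 2) \<in> D) \<and> \<not>((R n i 0, 2) \<in> D \<and> (R n i 1, 3) \<in> D) \<and> \<not>((R n i 0, 2) \<in> D \<and> (R n i 1, 1) \<in> D) \<and> \<not>((R n i 2, 2) \<in> D \<and> (R n i 1, 3) \<in> D) \<and> \<not>((R n i 2, 2) \<in> D \<and> (R n i 1, 1) \<in> D) \<and> \<not>((R n i 1, 3) \<in> D \<and> (R n i 1, 1) \<in> D)"
    by (rule exv2[OF assms(1,2) cond, of 1 2, unfolded PRs ar cl]) simp_all
  have E6: "((R n i 0, 3) \<in> D \<or> (R n i 2, 3) \<in> D \<or> (R n i 1, 4) \<in> D \<or> (R n i 1, 2) \<in> D) \<and> \<not>((R n i 0, 3) \<in> D \<and> (R n i 2, 3) \<in> D) \<and> \<not>((R n i 0, 3) \<in> D \<and> (R n i 1, 4) \<in> D) \<and> \<not>((R n i 0, 3) \<in> D \<and> (R n i 1, 2) \<in> D) \<and> \<not>((R n i 2, 3) \<in> D \<and> (R n i 1, 4) \<in> D) \<and> \<not>((R n i 2, 3) \<in> D \<and> (R n i 1, 2) \<in> D) \<and> \<not>((R n i 1, 4) \<in> D \<and> (R n i 1, 2) \<in> D)"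
    by (rule exv2[OF assms(1,2) cond, of 1 3, unfolded PRs ar cl]) simp_all
  have E7: "((R n i 0, 4) \<in> D \<or> (R n i 2, 4) \<in> D \<or> (R n i 1, 1) \<in> D \<or> (R n i 1, 3) \<in> D) \<and> \<not>((R n i 0, 4) \<in> D \<and> (R n i 2, 4) \<in> D) \<and> \<not>((R n i 0, 4) \<in> D \<and> (R n i 1, 1) \<in> D) \<and> \<not>((R n i 0, 4) \<in> D \<and> (R n i 1, 3) \<in> D) \<and> \<not>((R n i 2, 4) \<in> D \<and> (R n i 1, 1) \<in> D) \<and> \<not>((R n i 2, 4) \<in> D \<and> (R n i 1, 3) \<in> D) \<and> \<not>((R n i 1, 1) \<in> D \<and> (R n i 1, 3) \<in> D)"
    by (rule exv2[OF assms(1,2) cond, of 1 4, unfolded PRs ar cl]) simp_all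
  have E8: "((R n i 1, 1) \<in> D \<or> (R n i 3, 1) \<in> D \<or> (R n i 2, 2) \<in> D \<or> (R n i 2, 4) \<in> D) \<and> \<not>((R n i 1, 1) \<in> D \<and> (R n i 3, 1) \<in> D) \<and> \<not>((R n i 1, 1) \<in> D \<and> (R n i 2, 2) \<in> D) \<and> \<not>((R n i 1, 1) \<in> D \<and> (R n i 2, 4) \<in> D) \<and> \<not>((R n i 3, 1) \<in> D \<and> (R n i 2, 2) \<in> D) \<and> \<not>((R n i 3, 1) \<in> D \<and> (R n i 2, 4) \<in> D) \<and> \<not>((R n i 2, 2) \<in> D \<and> (R n i 2, 4) \<in> D)"
    by (rule exv2[OF assms(1,2) cond, of 2 1, unfolded PRs ar cl]) simp_all
  have E9: "((R n i 1, 2) \<in> D \<or> (R n i 3, 2) \<in> D \<or> (R n i 2, 3) \<in> D \<or> (R n i 2, 1) \<in> D) \<and> \<not>((R n i 1, 2) \<in> D \<and> (R n i 3, 2) \<in> D) \<and> \<not>((R n i 1, 2) \<in> D \<and> (R n i 2, 3) \<in> D) \<and> \<not>((R n i 1, 2) \<in> D \<and> (R n i 2, 1) \<in> D) \<and> \<not>((R n i 3, 2) \<in> D \<and> (R n i 2, 3) \<in> D) \<and> \<not>((R n i 3, 2) \<in> D \<and> (R n i 2, 1) \<in> D) \<and> \<not>((R n i 2, 3) \<in> D \<and> (R n i 2, 1) \<in> D)"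
    by (rule exv2[OF assms(1,2) cond, of 2 2, unfolded PRs ar cl]) simp_all
  have E10: "((R n i 1, 3) \<in> D \<or> (R n i 3, 3) \<in> D \<or> (R n i 2, 4) \<in> D \<or> (R n i 2, 2) \<in> D) \<and> \<not>((R n i 1, 3) \<in> D \<and> (R n i 3, 3) \<in> D) \<and> \<not>((R n i 1, 3) \<in> D \<and> (R n i 2, 4) \<in> D) \<and> \<not>((R n i 1, 3) \<in> D \<and> (R n i 2, 2) \<in> D) \<and> \<not>((R n i 3, 3) \<in> D \<and> (R n i 2, 4) \<in> D) \<and> \<not>((R n i 3, 3) \<in> D \<and> (R n i 2, 2) \<in> D) \<and> \<not>((R n i 2, 4) \<in> D \<and> (R n i 2, 2) \<in> D)"
    by (rule exv2[OF assms(1,2) cond, of 2 3, unfolded PRs ar cl]) simp_all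
  have E11: "((R n i 1, 4) \<in> D \<or> (R n i 3, 4) \<in> D \<or> (R n i 2, 1) \<in> D \<or> (R n i 2, 3) \<in> D) \<and> \<not>((R n i 1, 4) \<in> D \<and> (R n i 3, 4) \<in> D) \<and> \<not>((R n i 1, 4) \<in> D \<and> (R n i 2, 1) \<in> D) \<and> \<not>((R n i 1, 4) \<in> D \<and> (R n i 2, 3) \<in> D) \<and> \<not>((R n i 3, 4) \<in> D \<and> (R n i 2, 1) \<in> D) \<and> \<not>((R n i 3, 4) \<in> D \<and> (R n i 2, 3) \<in> D) \<and> \<not>((R n i 2, 1) \<in> D \<and> (R n i 2, 3) \<in> D)"
    by (rule exv2[OF assms(1,2) cond, of 2 4, unfolded PRs ar cl]) simp_all
  have E12: "((R n i 2, 1) \<in> D \<or> (R n i 4, 1) \<in> D \<or> (R n i 3, 2) \<in> D \<or> (R n i 3, 4) \<in> D) \<and> \<not>((R n i 2, 1) \<in> D \<and> (R n i 4, 1) \<in> D) \<and> \<not>((R n i 2, 1) \<in> D \<and> (R n i 3, 2) \<in> D) \<and> \<not>((R n i 2, 1) \<in> D \<and> (R n i 3, 4) \<in> D) \<and> \<not>((R n i 4, 1) \<in> D \<and> (R n i 3, 2) \<in> D) \<and> \<not>((R n i 4, 1) \<in> D \<and> (R n i 3, 4) \<in> D) \<and> \<not>((R n i 3, 2) \<in> D \<and> (R n i 3, 4) \<in> D)"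
    by (rule exv2[OF assms(1,2) cond, of 3 1, unfolded PRs ar cl]) simp_all
  have E13: "((R n i 2, 2) \<in> D \<or> (R n i 4, 2) \<in> D \<or> (R n i 3, 3) \<in> D \<or> (R n i 3, 1) \<in> D) \<and> \<not>((R n i 2, 2) \<in> D \<and> (R n i 4, 2) \<in> D) \<and> \<not>((R n i 2, 2) \<in> D \<and> (R n i 3, 3) \<in> D) \<and> \<not>((R n i 2, 2) \<in> D \<and> (R n i 3, 1) \<in> D) \<and> \<not>((R n i 4, 2) \<in> D \<and> (R n i 3, 3) \<in> D) \<and> \<not>((R n i 4, 2) \<in> D \<and> (R n i 3, 1) \<in> D) \<and> \<not>((R n i 3, 3) \<in> D \<and> (R n i 3, 1) \<in> D)"
    by (rule exv2[OF assms(1,2) cond, of 3 2, unfolded PRs ar cl]) simp_all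
  have E14: "((R n i 2, 3) \<in> D \<or> (R n i 4, 3) \<in> D \<or> (R n i 3, 4) \<in> D \<or> (R n i 3, 2) \<in> D) \<and> \<not>((R n i 2, 3) \<in> D \<and> (R n i 4, 3) \<in> D) \<and> \<not>((R n i 2, 3) \<in> D \<and> (R n i 3, 4) \<in> D) \<and> \<not>((R n i 2, 3) \<in> D \<and> (R n i 3, 2) \<in> D) \<and> \<not>((R n i 4, 3) \<in> D \<and> (R n i 3, 4) \<in> D) \<and> \<not>((R n i 4, 3) \<in> D \<and> (R n i 3, 2) \<in> D) \<and> \<not>((R n i 3, 4) \<in> D \<and> (R n i 3, 2) \<in> D)"
    by (rule exv2[OF assms(1,2) cond, of 3 3, unfolded PRs ar cl]) simp_all
  have E15: "((R n i 2, 4) \<in> D \<or> (R n i 4, 4) \<in> D \<or> (R n i 3, 1) \<in> D \<or> (R n i 3, 3) \<in> D) \<and> \<not>((R n i 2, 4) \<in> D \<and> (R n i 4, 4) \<in> D) \<and> \<not>((R n i 2, 4) \<in> D \<and> (R n i 3, 1) \<in> D) \<and> \<not>((R n i 2, 4) \<in> D \<and> (R n i 3, 3) \<in> D) \<and> \<not>((R n i 4, 4) \<in> D \<and> (R n i 3, 1) \<in> D) \<and> \<not>((R n i 4, 4) \<in> D \<and> (R n i 3, 3) \<in> D) \<and> \<not>((R n i 3, 1) \<in> D \<and> (R n i 3, 3) \<in> D)"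
    by (rule exv2[OF assms(1,2) cond, of 3 4, unfolded PRs ar cl]) simp_all
  have big: "((R n i 0, 1) \<in> D \<longrightarrow> (R n i 4, 1) \<in> D) \<and> ((R n i 3, 1) \<in> D \<longrightarrow> (RM n i, 1) \<in> D) \<and> ((R n i 0, 2) \<in> D \<longrightarrow> (R n i 4, 2) \<in> D) \<and> ((R n i 3, 2) \<in> D \<longrightarrow> (RM n i, 2) \<in> D) \<and> ((R n i 0, 3) \<in> D \<longrightarrow> (R n i 4, 3) \<in> D) \<and> ((R n i 3, 3) \<in> D \<longrightarrow> (RM n i, 3) \<in> D) \<and> ((R n i 0, 4) \<in> D \<longrightarrow> (R n i 4, 4) \<in> D) \<and> ((R n i 3, 4) \<in> D \<longrightarrow> (RM n i, 4) \<in> D)"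
    using E0 E1 E2 E3 E4 E5 E6 E7 E8 E9 E10 E11 E12 E13 E14 E15 by sat
  show ?thesis
  proof
    fix c :: nat assume "c \<in> {1..4}"
    then have "c = 1 \<or> c = 2 \<or> c = 3 \<or> c = 4" by auto
    then show "((R n i 0, c) \<in> D \<longrightarrow> (R n i 4, c) \<in> D) \<and> ((R n i 3, c) \<in> D \<longrightarrow> (RM n i, c) \<in> D)"
      using big by blast
  qed
qed



lemma cyc_sym: "cyc_adj n a b \<longleftrightarrow> cyc_adj n b a"
  unfolding cyc_adj_def by auto

lemma part2:
  assumes n7: "n \<ge> 7" and i: "i \<in> {1..n}" and td: "total_dom (gverts n 4) (gadj n 4) D"
    and cond: "\<forall>v\<in>Hset n 4 i 4. card (nbhd (gverts n 4) (gadj n 4) v \<inter> D) = 1"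
  shows "total_dom (Gij_verts n i 4) (Gij_adj n i 4) (D - (D \<inter> Hset n 4 i 4))"
proof -
  have P: "\<forall>c\<in>{1..4}. ((R n i 0, c) \<in> D \<longrightarrow> (R n i 4, c) \<in> D) \<and> ((R n i 3, c) \<in> D \<longrightarrow> (RM n i, c) \<in> D)"
    by (rule props[OF n7 i cond])
  have d: "distinct [RM n i, R n i 0, R n i 1, R n i 2, R n i 3, R n i 4]" using distinctR[OF n7 i] .
  have sub: "D \<subseteq> gverts n 4" using td by (simp add: total_dom_def)
  have ex4: "\<And>x. (\<exists>t<4. x = R n i t) \<longleftrightarrow> x = R n i 0 \<or> x = R n i 1 \<or> x = R n i 2 \<or> x = R n i 3"
  proof
    fix x assume "\<exists>t<4. x = R n i t"
    then obtain t where "t < 4" "x = R n i t" by blast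
    moreover have "t = 0 \<or> t = 1 \<or> t = 2 \<or> t = 3" using \<open>t < 4\<close> by auto
    ultimately show "x = R n i 0 \<or> x = R n i 1 \<or> x = R n i 2 \<or> x = R n i 3" by blast
  next
    fix x assume "x = R n i 0 \<or> x = R n i 1 \<or> x = R n i 2 \<or> x = R n i 3"
    moreover have "(0::nat) < 4" "(1::nat) < 4" "(2::nat) < 4" "(3::nat) < 4" by simp_all
    ultimately show "\<exists>t<4. x = R n i t" by blast
  qed
  have HR': "\<And>x k. (x, k) \<in> Hset n 4 i 4 \<longleftrightarrow> (\<exists>t<4. x = R n i t) \<and> k \<in> {1..4}"
    unfolding HR[OF n7 i] by blast
  have w4: "wrap n (i + 4) = R n i 4" using wrapR[OF i, of 4] n7 by simp
  have wm: "wrap n (i - 1) = RM n i" using wrapRM[OF i] .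
  show ?thesis unfolding total_dom_def
  proof (intro conjI ballI)
    show "D - D \<inter> Hset n 4 i 4 \<subseteq> Gij_verts n i 4" using sub unfolding Gij_verts_def by auto
  next
    fix v assume v: "v \<in> Gij_verts n i 4"
    obtain x c where vx: "v = (x, c)" by force
    have vg: "v \<in> gverts n 4" "v \<notin> Hset n 4 i 4" using v unfolding Gij_verts_def by auto
    then obtain u where u: "u \<in> D" "gadj n 4 v u" using td unfolding total_dom_def by blast
    have xc: "x \<in> {1..n}" "c \<in> {1..4}" using vg(1) vx unfolding gverts_def by auto
    have xn: "\<not> (x = R n i 0 \<or> x = R n i 1 \<or> x = R n i 2 \<or> x = R n i 3)"
      using vg(2) xc(2) unfolding vx HR' ex4 by blast
    show "\<exists>u\<in>D - D \<inter> Hset n 4 i 4. Gij_adj n i 4 v u"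
    proof (cases "u \<in> Hset n 4 i 4")
      case False
      then have "u \<in> Gij_verts n i 4" using u(1) sub unfolding Gij_verts_def by auto
      then show ?thesis using u v False unfolding Gij_adj_def by blast
    next
      case True
      then obtain t k where uk: "u = (R n i t, k)" "t < 4" "k \<in> {1..4}" unfolding HR[OF n7 i] by blast
      have tle: "t \<le> 3" using uk(2) by simp
      have "x \<noteq> R n i t" using xn uk(2) ex4 by blast
      then have ck: "c = k" "cyc_adj n (R n i t) x" using u(2) unfolding vx uk gadj_def
        by (auto simp: cyc_sym)
      then have "x = PR n i t \<or> x = R n i (t + 1)" using rowadj[OF n7 i tle] by simp
      moreover have "t = 0 \<or> t = 1 \<or> t = 2 \<or> t = 3" using uk(2) by auto
      ultimately have cs: "(t = 0 \<and> x = RM n i) \<or> (t = 3 \<and> x = R n i 4)"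
        using xn PRs[of n i] by (auto simp: numeral_eq_Suc)
      have r4: "\<And>c. (R n i 4, c) \<notin> Hset n 4 i 4" "\<And>c. (RM n i, c) \<notin> Hset n 4 i 4"
        using d unfolding HR' ex4 by auto
      from cs show ?thesis
      proof
        assume a: "t = 0 \<and> x = RM n i"
        then have "(R n i 0, c) \<in> D" using u(1) uk(1) ck(1) by simp
        then have "(R n i 4, c) \<in> D" using P xc(2) by blast
        moreover have "Gij_adj n i 4 v (R n i 4, c)"
          unfolding Gij_adj_def vx w4 wm using a xc(2) by blast
        ultimately show ?thesis using r4 by blast
      next
        assume a: "t = 3 \<and> x = R n i 4"
        then have "(R n i 3, c) \<in> D" using u(1) uk(1) ck(1) by simp
        then have "(RM n i, c) \<in> D" using P xc(2) by blast
        moreover have "Gij_adj n i 4 v (RM n i, c)"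
          unfolding Gij_adj_def vx w4 wm using a xc(2) by blast
        ultimately show ?thesis using r4 by blast
      qed
    qed
  qed
qed

theorem lemma4p3:
  fixes n :: nat and D :: "(nat \<times> nat) set"
  assumes "n \<ge> 7"
    and "total_dom (gverts n 4) (gadj n 4) D"
  shows "(\<forall>i\<in>{1..n}. card (D \<inter> Hset n 4 i 4) \<ge> 4) \<and>
         (\<forall>i\<in>{1..n}.
            (\<forall>v\<in>Hset n 4 i 4. card (nbhd (gverts n 4) (gadj n 4) v \<inter> D) = 1) \<longrightarrow>
            total_dom (Gij_verts n i 4) (Gij_adj n i 4) (D - (D \<inter> Hset n 4 i 4)))"
  using part1[OF assms(1) _ assms(2)] part2[OF assms(1) _ assms(2)] by blast

end
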